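(* For $i\in\mathbb Z_{\ge0}$, $J\in\mathbb Z_{>0}$ and $0\le j\le J$, $$W_J(i,J;i+J-j,j\mid v,\lambda)=f(2\eta)^{J-j}\frac{[2\eta i-\eta\Lambda-v]_j}{[\eta\Lambda-v]_J}\cdot\frac{[v+\lambda-\eta\Lambda+2\eta(i+2J-j-1)]_{J-j}\,[\lambda+2\eta(i+J-\Lambda-1)]_j}{[\lambda+2\eta(J-1)]_J}.$$
   Context: Fix $\eta,\tau\in\mathbb C$, $\operatorname{Im}\tau>0$. $f(z)$ denotes either $\theta(z)=-\sum_{j\in\mathbb Z}\exp\big(\pi\mathbf i\tau(j+\tfrac12)^2+2\pi\mathbf i(j+\tfrac12)(z+\tfrac12)\big)$ or $\sin(\pi z)$. Elliptic Pochhammer: $[a]_k=\prod_{m=0}^{k-1}f(a-2\eta m)$ for $k\ge0$, $[a]_k=\prod_{m=1}^{-k}f(a+2\eta m)^{-1}$ for $k<0$. Unfused weights ($k\ge0$): $W_1(k,0;k,0\mid v,\lambda,\Lambda)=\frac{f(\eta(\Lambda-2k)-v)f(\lambda+2k\eta)}{f(\eta\Lambda-v)f(\lambda)}$, $W_1(k,1;k+1,0\mid\cdot)=\frac{f(v+\lambda+\eta(2k+2-\Lambda))f(2\eta)}{f(\eta\Lambda-v)f(\lambda)}$, $W_1(k,0;k-1,1\mid\cdot)=\frac{f(\lambda-v+\eta(2k-2-\Lambda))f(2\eta(\Lambda+1-k))f(2k\eta)}{f(\eta\Lambda-v)f(\lambda)f(2\eta)}$ ($k\ge1$), $W_1(k,1;k,1\mid\cdot)=\frac{f(\eta(2k-\Lambda)-v)f(\lambda+2\eta(k-\Lambda))}{f(\eta\Lambda-v)f(\lambda)}$,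 and $0$ for all other quadruples. Column weights: for $\mathcal J_1=(j_{1,k})_{k=1}^J,\mathcal J_2=(j_{2,k})_{k=1}^J\in\{0,1\}^J$, $i^{(1)}=i_1$, $i^{(k+1)}=i^{(k)}+j_{1,k}-j_{2,k}$, $\Phi_J=\lambda$, $\Phi_k=\Phi_{k+1}\mp2\eta$ according as $j_{1,k+1}=0$ or $1$; $W_J(i_1,\mathcal J_1;i_2,\mathcal J_2\mid v,\lambda)=\prod_{k=1}^JW_1(i^{(k)},j_{1,k};i^{(k+1)},j_{2,k}\mid v+2\eta(k-1),\Phi_k,\Lambda)$ if all $i^{(k)}\ge0$ and $i^{(J+1)}=i_2$, else $0$. The fused weight is $W_J(i_1,j_1;i_2,j_2\mid v,\lambda)=\sum_{|\mathcal J_1|=j_1}W_J(i_1,\mathcal J_1;i_2,\mathcal K\mid v,\lambda)$ for any $\mathcal K\in\{0,1\}^J$ with $|\mathcal K|=j_2$ (independent of the choice of $\mathcal K$), and $0$ if $j_2\notin\{0,\dots,J\}$; $\Lambda$ is a fixed parameter suppressed from notation. *)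

theory Defs
  imports "HOL-Analysis.Analysis"
begin

definition theta :: "complex \<Rightarrow> complex \<Rightarrow> complex" where
  "theta tau z = - (\<Sum>\<^sub>\<infinity> j::int.
      exp (of_real pi * \<i> * tau * (of_int j + 1/2)^2
           + 2 * of_real pi * \<i> * (of_int j + 1/2) * (z + 1/2)))"

definition sinpi :: "complex \<Rightarrow> complex" where
  "sinpi z = sin (of_real pi * z)"

text \<open>Elliptic Pochhammer symbol [a]_k.\<close>
definition epoch :: "(complex \<Rightarrow> complex) \<Rightarrow> complex \<Rightarrow> complex \<Rightarrow> int \<Rightarrow> complex" where
  "epoch f eta a k =
     (if k \<ge> 0 then (\<Prod>m<nat k. f (a - 2 * eta * of_nat m))
      else (\<Prod>m\<in>{1..nat (-k)}. inverse (f (a + 2 * eta * of_nat m))))"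

definition W1 :: "(complex \<Rightarrow> complex) \<Rightarrow> complex \<Rightarrow> complex \<Rightarrow>
    int \<Rightarrow> nat \<Rightarrow> int \<Rightarrow> nat \<Rightarrow> complex \<Rightarrow> complex \<Rightarrow> complex" where
  "W1 f eta Lam k j1 k' j2 v lam =
     (if k \<ge> 0 \<and> j1 = 0 \<and> k' = k \<and> j2 = 0 then
        f (eta * (Lam - 2 * of_int k) - v) * f (lam + 2 * of_int k * eta)
          / (f (eta * Lam - v) * f lam)
      else if k \<ge> 0 \<and> j1 = 1 \<and> k' = k + 1 \<and> j2 = 0 then
        f (v + lam + eta * (2 * of_int k + 2 - Lam)) * f (2 * eta)
          / (f (eta * Lam - v) * f lam)
      else if k \<ge> 1 \<and> j1 = 0 \<and> k' = k - 1 \<and> j2 = 1 then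
        f (lam - v + eta * (2 * of_int k - 2 - Lam)) * f (2 * eta * (Lam + 1 - of_int k))
          * f (2 * of_int k * eta)
          / (f (eta * Lam - v) * f lam * f (2 * eta))
      else if k \<ge> 0 \<and> j1 = 1 \<and> k' = k \<and> j2 = 1 then
        f (eta * (2 * of_int k - Lam) - v) * f (lam + 2 * eta * (of_int k - Lam))
          / (f (eta * Lam - v) * f lam)
      else 0)"

text \<open>Column weights W_J(i1, J1; i2, J2 | v, lam) for 0/1-lists J1, J2 of length J
  (0-based positions p = k - 1).\<close>
definition ipos :: "int \<Rightarrow> nat list \<Rightarrow> nat list \<Rightarrow> nat \<Rightarrow> int" where
  "ipos i1 xs ys p = i1 + (\<Sum>m<p. int (xs ! m) - int (ys ! m))"

definition Phi :: "complex \<Rightarrow> complex \<Rightarrow> nat list \<Rightarrow> nat \<Rightarrow> complex" where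
  "Phi eta lam xs p = lam + (\<Sum>m\<in>{p+1..<length xs}. (if xs ! m = 0 then - 2 * eta else 2 * eta))"

definition Wcol :: "(complex \<Rightarrow> complex) \<Rightarrow> complex \<Rightarrow> complex \<Rightarrow>
    int \<Rightarrow> nat list \<Rightarrow> int \<Rightarrow> nat list \<Rightarrow> complex \<Rightarrow> complex \<Rightarrow> complex" where
  "Wcol f eta Lam i1 xs i2 ys v lam =
     (let J = length xs in
      if (\<forall>p\<le>J. ipos i1 xs ys p \<ge> 0) \<and> ipos i1 xs ys J = i2 then
        (\<Prod>p<J. W1 f eta Lam (ipos i1 xs ys p) (xs ! p) (ipos i1 xs ys (Suc p)) (ys ! p)
                  (v + 2 * eta * of_nat p) (Phi eta lam xs p))
      else 0)"

text \<open>Fused weight W_J(i1, j1; i2, j2 | v, lam); the representative K with |K| = j2 is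
  chosen as j2 ones followed by J - j2 zeros (the paper states the sum is independent
  of this choice).\<close>
definition Wfused :: "(complex \<Rightarrow> complex) \<Rightarrow> complex \<Rightarrow> complex \<Rightarrow> nat \<Rightarrow>
    int \<Rightarrow> nat \<Rightarrow> int \<Rightarrow> nat \<Rightarrow> complex \<Rightarrow> complex \<Rightarrow> complex" where
  "Wfused f eta Lam J i1 j1 i2 j2 v lam =
     (if j2 \<le> J then
        (\<Sum>xs\<in>{xs. length xs = J \<and> set xs \<subseteq> {0,1} \<and> sum_list xs = j1}.
           Wcol f eta Lam i1 xs i2 (replicate j2 1 @ replicate (J - j2) 0) v lam)
      else 0)"

end

theory Submission
  imports Defs
begin

lemma all_ones: "set xs \<subseteq> {0,1} \<Longrightarrow> sum_list xs = length xs \<Longrightarrow> xs = replicate (length xs) (1::nat)"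
proof (induction xs)
  case Nil then show ?case by simp
next
  case (Cons a xs)
  have "sum_list xs \<le> length xs" using Cons.prems(1)
    by (induction xs) auto
  moreover have "a \<le> 1" using Cons.prems(1) by auto
  ultimately have "a = 1" "sum_list xs = length xs" using Cons.prems(2) by auto
  then show ?case using Cons by simp
qed

lemma the_set: "{xs. length xs = J \<and> set xs \<subseteq> {0,1} \<and> sum_list xs = J} = {replicate J (1::nat)}"
proof
  show "{xs. length xs = J \<and> set xs \<subseteq> {0,1} \<and> sum_list xs = J} \<subseteq> {replicate J (1::nat)}"
  proof
    fix xs assume "xs \<in> {xs. length xs = J \<and> set xs \<subseteq> {0,1} \<and> sum_list xs = J}"
    then have "length xs = J" "set xs \<subseteq> {0,1}" "sum_list xs = length xs" by auto
    then have "xs = replicate J 1" using all_ones by metis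
    then show "xs \<in> {replicate J (1::nat)}" by simp
  qed
qed (auto simp: sum_list_replicate)

lemma ipos_eval:
  assumes "j \<le> J" "p \<le> J"
  shows "ipos i1 (replicate J 1) (replicate j 1 @ replicate (J - j) 0) p = i1 + int p - int (min p j)"
  using assms(2)
proof (induction p)
  case 0 then show ?case by (simp add: ipos_def)
next
  case (Suc p)
  have "ipos i1 (replicate J 1) (replicate j 1 @ replicate (J - j) 0) (Suc p)
     = ipos i1 (replicate J 1) (replicate j 1 @ replicate (J - j) 0) p
       + (int (replicate J 1 ! p) - int ((replicate j 1 @ replicate (J - j) (0::nat)) ! p))"
    by (simp add: ipos_def)
  also have "\<dots> = i1 + int p - int (min p j) + (if p < j then 0 else 1)"
    using Suc assms by (simp add: nth_append)
  finally show ?case by auto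
qed

lemma Phi_eval:
  assumes "p < J"
  shows "Phi eta lam (replicate J 1) p = lam + 2 * eta * (of_nat J - 1 - of_nat p)"
proof -
  have "Phi eta lam (replicate J 1) p = lam + (\<Sum>m\<in>{p+1..<J}. 2 * eta)"
    unfolding Phi_def by (intro arg_cong2[where f="(+)"] refl sum.cong) auto
  also have "\<dots> = lam + of_nat (J - (p+1)) * (2 * eta)" by simp
  also have "\<dots> = lam + 2 * eta * (of_nat J - 1 - of_nat p)"
    using assms by (simp add: of_nat_diff algebra_simps)
  finally show ?thesis .
qed

lemma epoch_nat: "epoch f eta a (int k) = (\<Prod>m<k. f (a - 2 * eta * of_nat m))"
  by (simp add: epoch_def)

theorem lemma3p8:
  fixes eta tau Lam v lam :: complex and f :: "complex \<Rightarrow> complex"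
    and i J j :: nat
  assumes "Im tau > 0"
    and "f = theta tau \<or> f = sinpi"
    and "J > 0" and "j \<le> J"
  shows "Wfused f eta Lam J (int i) J (int i + int J - int j) j v lam =
    f (2 * eta) ^ (J - j)
    * epoch f eta (2 * eta * of_nat i - eta * Lam - v) (int j)
    / epoch f eta (eta * Lam - v) (int J)
    * (epoch f eta (v + lam - eta * Lam + 2 * eta * (of_nat i + 2 * of_nat J - of_nat j - 1)) (int (J - j))
       * epoch f eta (lam + 2 * eta * (of_nat i + of_nat J - Lam - 1)) (int j)
       / epoch f eta (lam + 2 * eta * (of_nat J - 1)) (int J))"
proof -
  let ?xs = "replicate J (1::nat)"
  let ?ys = "replicate j (1::nat) @ replicate (J - j) 0"
  define D where "D p = f (eta * Lam - (v + 2 * eta * of_nat p)) * f (lam + 2 * eta * (of_nat J - 1 - of_nat p))" for p :: nat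
  define N1 where "N1 p = f (2 * eta * of_nat i - eta * Lam - v - 2 * eta * of_nat p)" for p :: nat
  define N2 where "N2 p = f (lam + 2 * eta * (of_nat i + of_nat J - Lam - 1) - 2 * eta * of_nat p)" for p :: nat
  define M where "M p = f (v + lam - eta * Lam + 2 * eta * (of_nat i + of_nat J + of_nat p - of_nat j))" for p :: nat
  define g where "g p = (if p < j then N1 p * N2 p else M p * f (2 * eta))" for p :: nat
  have ip: "\<And>p. p \<le> J \<Longrightarrow> ipos (int i) ?xs ?ys p = int i + int p - int (min p j)"
    using ipos_eval assms(4) by blast
  have cond: "(\<forall>p\<le>J. ipos (int i) ?xs ?ys p \<ge> 0) \<and> ipos (int i) ?xs ?ys J = int i + int J - int j"
    using ip assms(4) by auto
  have W1eq: "W1 f eta Lam (ipos (int i) ?xs ?ys p) (?xs ! p) (ipos (int i) ?xs ?ys (Suc p)) (?ys ! p)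
                  (v + 2 * eta * of_nat p) (Phi eta lam ?xs p) = g p / D p" if "p < J" for p
  proof (cases "p < j")
    case True
    have a: "ipos (int i) ?xs ?ys p = int i" "ipos (int i) ?xs ?ys (Suc p) = int i"
      using ip[of p] ip[of "Suc p"] that True by auto
    have b: "?xs ! p = 1" "?ys ! p = 1" using that True by (auto simp: nth_append)
    show ?thesis unfolding a b Phi_eval[OF that] using True that
      by (simp add: W1_def g_def N1_def N2_def D_def algebra_simps)
  next
    case False
    have a: "ipos (int i) ?xs ?ys p = int i + int p - int j" "ipos (int i) ?xs ?ys (Suc p) = int i + int p - int j + 1"
      using ip[of p] ip[of "Suc p"] that False by auto
    have b: "?xs ! p = 1" "?ys ! p = 0" using that False by (auto simp: nth_append)
    show ?thesis unfolding a b Phi_eval[OF that] using False that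
      by (simp add: W1_def g_def M_def D_def algebra_simps of_nat_diff)
  qed
  have LHS: "Wfused f eta Lam J (int i) J (int i + int J - int j) j v lam = (\<Prod>p<J. g p / D p)"
  proof -
    have "Wfused f eta Lam J (int i) J (int i + int J - int j) j v lam = Wcol f eta Lam (int i) ?xs (int i + int J - int j) ?ys v lam"
      unfolding Wfused_def the_set if_P[OF assms(4)] by simp
    also have "\<dots> = (\<Prod>p<J. g p / D p)"
      unfolding Wcol_def Let_def length_replicate if_P[OF cond]
      by (rule prod.cong[OF refl], rule W1eq, simp)
    finally show ?thesis .
  qed
  also have "\<dots> = (\<Prod>p<J. g p) / (\<Prod>p<J. D p)" by (simp add: prod_dividef)
  also have "(\<Prod>p<J. g p) = (\<Prod>p<j. N1 p * N2 p) * (\<Prod>p\<in>{j..<J}. M p * f (2 * eta))"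
  proof -
    have "{..<J} = {..<j} \<union> {j..<J}" using assms(4) by auto
    then have "(\<Prod>p<J. g p) = (\<Prod>p<j. g p) * (\<Prod>p\<in>{j..<J}. g p)"
      by (simp add: prod.union_disjoint ivl_disj_int)
    then show ?thesis by (simp add: g_def)
  qed
  finally have L: "Wfused f eta Lam J (int i) J (int i + int J - int j) j v lam =
     (\<Prod>p<j. N1 p * N2 p) * (\<Prod>p\<in>{j..<J}. M p * f (2 * eta)) / (\<Prod>p<J. D p)" .
  define n where "n = J - j"
  define C where "C = v + lam - eta * Lam + 2 * eta * (of_nat i + 2 * of_nat J - of_nat j - 1)"
  have Mprod: "(\<Prod>p\<in>{j..<J}. M p * f (2 * eta)) = (\<Prod>m<n. f (C - 2 * eta * of_nat m)) * f (2*eta) ^ n"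
  proof -
    have "(\<Prod>p\<in>{j..<J}. M p * f (2 * eta)) = (\<Prod>p\<in>{j..<J}. M p) * f (2*eta) ^ n"
      by (simp add: prod.distrib n_def)
    also have "(\<Prod>p\<in>{j..<J}. M p) = (\<Prod>q\<in>{0..<n}. M (q + j))"
      using prod.shift_bounds_nat_ivl[of M 0 j n] assms(4) by (simp add: n_def)
    also have "\<dots> = (\<Prod>q<n. M (n - Suc q + j))"
      using prod.nat_diff_reindex[of "\<lambda>q. M (q + j)" n] by (simp add: atLeast0LessThan)
    also have "\<dots> = (\<Prod>m<n. f (C - 2 * eta * of_nat m))"
    proof (rule prod.cong[OF refl])
      fix m assume "m \<in> {..<n}"
      then have m: "m < n" by simp
      have h: "of_nat (n - Suc m) = (of_nat J - of_nat j - 1 - of_nat m :: complex)"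
        using m assms(4) by (simp add: of_nat_diff n_def)
      show "M (n - Suc m + j) = f (C - 2 * eta * of_nat m)"
        unfolding M_def C_def of_nat_add h by (rule arg_cong[where f=f]) (simp add: algebra_simps)
    qed
    finally show ?thesis .
  qed
  have E1: "epoch f eta (2 * eta * of_nat i - eta * Lam - v) (int j) = (\<Prod>p<j. N1 p)"
    unfolding epoch_nat N1_def by (simp add: algebra_simps)
  have E2: "epoch f eta (lam + 2 * eta * (of_nat i + of_nat J - Lam - 1)) (int j) = (\<Prod>p<j. N2 p)"
    unfolding epoch_nat N2_def by (simp add: algebra_simps)
  have E3: "epoch f eta (v + lam - eta * Lam + 2 * eta * (of_nat i + 2 * of_nat J - of_nat j - 1)) (int n)
     = (\<Prod>m<n. f (C - 2 * eta * of_nat m))"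
    unfolding epoch_nat C_def n_def ..
  define D1 where "D1 p = f (eta * Lam - (v + 2 * eta * of_nat p))" for p :: nat
  define D2 where "D2 p = f (lam + 2 * eta * (of_nat J - 1 - of_nat p))" for p :: nat
  have E4: "epoch f eta (eta * Lam - v) (int J) = (\<Prod>p<J. D1 p)"
    unfolding epoch_nat D1_def by (simp add: algebra_simps)
  have E5: "epoch f eta (lam + 2 * eta * (of_nat J - 1)) (int J) = (\<Prod>p<J. D2 p)"
    unfolding epoch_nat D2_def by (simp add: algebra_simps)
  have DD: "(\<Prod>p<J. D p) = (\<Prod>p<J. D1 p) * (\<Prod>p<J. D2 p)"
    unfolding D_def D1_def D2_def by (simp add: prod.distrib)
  have alg: "\<And>a b c e ff g :: complex. a * b / c * (e * ff / g) = b * ff * (e * a) / (c * g)"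
    by (simp add: divide_inverse mult_ac)
  show ?thesis
    unfolding n_def[symmetric] L Mprod E1 E2 E3 E4 E5 DD alg by (simp add: prod.distrib)
qed

end
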